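(* Let $K$ be a knot and $N\ge1$. There exists a family of operators $d_{a|b}$ ($a,b\ge0$, $a+b=N$) on $\mathcal{H}(K)$ satisfying $$d_{N|0}=d_N,\quad [E,d_{a|b}]=b\cdot d_{a+1|b-1},\quad [F,d_{a|b}]=a\cdot d_{a-1|b+1},\quad [H,d_{a|b}]=(a-b)\cdot d_{a|b}.$$ The symmetry of $\mathcal{H}(K)$ exchanges $d_{a|b}$ with $d_{b|a}$.
   Context: $\mathcal{H}(K)$ is the reduced triply graded (HOMFLY-PT) Khovanov–Rozansky homology of the knot $K$ over $\mathbb{C}$, finite-dimensional and graded by $(q,a,t)$. By Gorsky–Hogancamp–Mellit, $\mathcal{H}(K)$ carries an action of $\mathfrak{sl}(2)$ by operators $E,F,H$ with $[E,F]=H$, $[H,E]=2E$, $[H,F]=-2F$, where $H=\tfrac12\deg_q$, $E$ raises $q$ by $4$ and $F$ lowers it by $4$; they preserve the $a$-grading and $\Delta=q+a+t$. As a consequence $\mathcal{H}(K)$ is symmetric: the $\mathfrak{sl}(2)$-module structure gives an identification exchanging tridegrees $(q,a,t)$ and $(-q,a,t+2q)$ (the symmetry). $d_N$ denotes the first differential of Rasmussen's spectral sequence from $\mathcal{H}(K)$ to reduced $\mathfrak{sl}(N)$ homology; it changes degrees by $(q,a,t)\mapsto(q+2N,a-2,t)$. The operator $E$ commutes with $d_N$. *)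

theory Defs
  imports "HOL-Analysis.Analysis"
begin

text \<open>Abstract model of the reduced triply graded homology H(K) of a knot K.  H(K) is C^n with a basis of homogeneous vectors indexed by the
  finite type 'n; basis vector i has tridegree (qd i, ad i, td i).\<close>

type_synonym 'n op = "complex ^ 'n ^ 'n"

definition smat :: "complex \<Rightarrow> 'n::finite op \<Rightarrow> 'n op" where
  "smat c M = (\<chi> i j. c * M $ i $ j)"

definition comm :: "'n::finite op \<Rightarrow> 'n op \<Rightarrow> 'n op" where
  "comm X Y = X ** Y - Y ** X"

primrec mpow :: "'n::finite op \<Rightarrow> nat \<Rightarrow> 'n op" where
  "mpow A 0 = mat 1"
| "mpow A (Suc k) = A ** mpow A k"

text \<open>Exponential of a nilpotent operator on an n-dimensional space
  (a finite sum, since A^n = 0).\<close>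
definition nexp :: "'n::finite op \<Rightarrow> 'n op" where
  "nexp A = (\<Sum>k\<le>CARD('n). smat (inverse (fact k)) (mpow A k))"

definition homog ::
  "('n::finite \<Rightarrow> int) \<Rightarrow> ('n \<Rightarrow> int) \<Rightarrow> ('n \<Rightarrow> int) \<Rightarrow> 'n op \<Rightarrow> int \<Rightarrow> int \<Rightarrow> int \<Rightarrow> bool" where
  "homog qd ad td M dq da dt \<longleftrightarrow>
     (\<forall>i j. M $ i $ j \<noteq> 0 \<longrightarrow>
        qd i = qd j + dq \<and> ad i = ad j + da \<and> td i = td j + dt)"

definition half_qdeg :: "('n::finite \<Rightarrow> int) \<Rightarrow> 'n op" where
  "half_qdeg qd = (\<chi> i j. if i = j then of_int (qd i) / 2 else 0)"

text \<open>The symmetry of H(K) given by the sl(2)-module structure: the Weyl group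
  element exp(E) exp(-F) exp(E), which maps tridegree (q,a,t) to (-q,a,t+2q).\<close>
definition sl2_sym :: "'n::finite op \<Rightarrow> 'n op \<Rightarrow> 'n op" where
  "sl2_sym E F = nexp E ** nexp (- F) ** nexp E"

end

theory Submission
  imports Defs
begin

lemma mm_add_l: "((A::'n::finite op) + B) ** C = A ** C + B ** C"
  by (vector matrix_matrix_mult_def sum.distrib[symmetric] field_simps)
lemma mm_add_r: "(A::'n::finite op) ** (B + C) = A ** B + A ** C"
  by (rule matrix_add_ldistrib)
lemma mm_diff_l: "((A::'n::finite op) - B) ** C = A ** C - B ** C"
  by (vector matrix_matrix_mult_def sum_subtractf[symmetric] field_simps)
lemma mm_diff_r: "(A::'n::finite op) ** (B - C) = A ** B - A ** C"
  by (vector matrix_matrix_mult_def sum_subtractf[symmetric] field_simps)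
lemma mm_neg_l: "(- (A::'n::finite op)) ** C = - (A ** C)"
  by (vector matrix_matrix_mult_def sum_negf[symmetric])
lemma mm_neg_r: "(A::'n::finite op) ** (- C) = - (A ** C)"
  by (vector matrix_matrix_mult_def sum_negf[symmetric])
lemma mm_scale_l: "(r *\<^sub>R (A::'n::finite op)) ** C = r *\<^sub>R (A ** C)"
  by (simp add: scalar_matrix_assoc)
lemma mm_scale_r: "(A::'n::finite op) ** (r *\<^sub>R C) = r *\<^sub>R (A ** C)"
  by (simp add: scalar_matrix_assoc matrix_scalar_ac)
lemma mm_sum_l: "(\<Sum>i\<in>I. (f i::'n::finite op)) ** (C::'n::finite op) = (\<Sum>i\<in>I. f i ** C)"
  by (induction I rule: infinite_finite_induct) (auto simp: mm_add_l)
lemma mm_sum_r: "(C::'n::finite op) ** (\<Sum>i\<in>I. (f i::'n::finite op)) = (\<Sum>i\<in>I. C ** f i)"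
  by (induction I rule: infinite_finite_induct) (auto simp: mm_add_r)

lemmas mm_simps = mm_add_l mm_add_r mm_diff_l mm_diff_r mm_neg_l mm_neg_r mm_scale_l mm_scale_r

lemma smat_real: "smat (of_real r) M = r *\<^sub>R M"
  by (simp add: smat_def vec_eq_iff) (simp add: scaleR_conv_of_real)

lemma comm_add_r: "comm X (A + B) = comm X A + comm X B"
  by (simp add: comm_def mm_simps)
lemma comm_add_l: "comm (A + B) X = comm A X + comm B X"
  by (simp add: comm_def mm_simps)
lemma comm_diff_r: "comm X (A - B) = comm X A - comm X B"
  by (simp add: comm_def mm_simps)
lemma comm_diff_l: "comm (A - B) X = comm A X - comm B X"
  by (simp add: comm_def mm_simps)
lemma comm_neg_r: "comm X (- A) = - comm X A"
  by (simp add: comm_def mm_simps)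
lemma comm_neg_l: "comm (- A) X = - comm A X"
  by (simp add: comm_def mm_simps)
lemma comm_scale_r: "comm X (r *\<^sub>R A) = r *\<^sub>R comm X A"
  by (simp add: comm_def mm_simps scaleR_diff_right)
lemma comm_scale_l: "comm (r *\<^sub>R A) X = r *\<^sub>R comm A X"
  by (simp add: comm_def mm_simps scaleR_diff_right)
lemma comm_self: "comm X X = 0" by (simp add: comm_def)
lemma comm_anti: "comm X Y = - comm Y X" by (simp add: comm_def)
lemma comm_zero_r: "comm X 0 = 0" by (simp add: comm_def)
lemma jacobi: "comm A (comm B C) = comm (comm A B) C + comm B (comm A C)"
  by (simp add: comm_def mm_simps matrix_mul_assoc)

lemmas comm_simps = comm_add_r comm_add_l comm_diff_r comm_diff_l comm_neg_r comm_neg_l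
  comm_scale_r comm_scale_l comm_self comm_zero_r

lemma linear_comm: "linear (comm X)"
  by (rule linearI) (simp_all add: comm_simps)

lemma linear_adp: "linear (comm X ^^ j)"
proof (induction j)
  case 0 then show ?case using linear_id by (simp add: id_def)
next
  case (Suc j)
  have "comm X ^^ Suc j = comm X \<circ> (comm X ^^ j)" by simp
  then show ?case using linear_compose[OF Suc linear_comm[of X]] by (simp add: o_def)
qed

definition qh :: "('n::finite \<Rightarrow> int) \<Rightarrow> 'n op \<Rightarrow> int \<Rightarrow> bool" where
  "qh qd M e \<longleftrightarrow> (\<forall>i j. M $ i $ j \<noteq> 0 \<longrightarrow> qd i = qd j + e)"

lemma homog_qh: "homog qd ad td M dq da dt \<Longrightarrow> qh qd M dq"
  by (simp add: homog_def qh_def)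

lemma mm_nz: "((A::'n::finite op) ** B) $ i $ j \<noteq> 0 \<Longrightarrow> \<exists>l. A $ i $ l \<noteq> 0 \<and> B $ l $ j \<noteq> 0"
  unfolding matrix_matrix_mult_def by (auto intro: ccontr simp: sum.neutral)

lemma qh_mm: "qh qd A e \<Longrightarrow> qh qd B f \<Longrightarrow> qh qd (A ** B) (e + f)"
  unfolding qh_def
proof (intro allI impI)
  fix i j assume a: "\<forall>i j. A $ i $ j \<noteq> 0 \<longrightarrow> qd i = qd j + e" "\<forall>i j. B $ i $ j \<noteq> 0 \<longrightarrow> qd i = qd j + f"
    and "(A ** B) $ i $ j \<noteq> 0"
  then obtain l where l: "A $ i $ l \<noteq> 0" "B $ l $ j \<noteq> 0" using mm_nz by blast
  have "qd i = qd l + e" "qd l = qd j + f" using a(1)[rule_format, OF l(1)] a(2)[rule_format, OF l(2)] by auto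
  then show "qd i = qd j + (e + f)" by simp
qed

lemma qh_diff: "qh qd A e \<Longrightarrow> qh qd B e \<Longrightarrow> qh qd (A - B) e"
  unfolding qh_def
proof (intro allI impI)
  fix i j assume a: "\<forall>i j. A $ i $ j \<noteq> 0 \<longrightarrow> qd i = qd j + e" "\<forall>i j. B $ i $ j \<noteq> 0 \<longrightarrow> qd i = qd j + e"
    and "(A - B) $ i $ j \<noteq> 0"
  have "A $ i $ j \<noteq> 0 \<or> B $ i $ j \<noteq> 0" using \<open>(A - B) $ i $ j \<noteq> 0\<close> by auto
  then show "qd i = qd j + e" using a(1)[rule_format, of i j] a(2)[rule_format, of i j] by blast
qed

lemma qh_comm: "qh qd A e \<Longrightarrow> qh qd B f \<Longrightarrow> qh qd (comm A B) (e + f)"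
proof -
  assume a: "qh qd A e" "qh qd B f"
  have "qh qd (B ** A) (e + f)" using qh_mm[OF a(2) a(1)] by (simp add: add.commute)
  then show ?thesis unfolding comm_def by (rule qh_diff[OF qh_mm[OF a]])
qed

lemma qh_scale: "qh qd A e \<Longrightarrow> qh qd (r *\<^sub>R A) e"
  unfolding qh_def by simp

lemma scale_entry: "(r *\<^sub>R (M::'n::finite op)) $ i $ j = complex_of_real r * M $ i $ j"
  by (simp only: vector_scaleR_component) (simp add: scaleR_conv_of_real)

lemma scale_c: "r *\<^sub>R (z::complex) = complex_of_real r * z"
  by (rule scaleR_conv_of_real)

lemma H_mm: "(half_qdeg qd ** M) $ i $ j = of_int (qd i) / 2 * M $ i $ j"
  unfolding half_qdeg_def matrix_matrix_mult_def
  by (simp add: if_distrib if_distribR sum.delta cong: if_cong)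

lemma mm_H: "(M ** half_qdeg qd) $ i $ j = M $ i $ j * (of_int (qd j) / 2)"
  unfolding half_qdeg_def matrix_matrix_mult_def
  by (simp add: if_distrib if_distribR sum.delta' cong: if_cong)

lemma comm_H_entry: "comm (half_qdeg qd) M $ i $ j = (of_int (qd i) - of_int (qd j)) / 2 * M $ i $ j"
  by (simp add: comm_def H_mm mm_H field_simps)

lemma qh_comm_H:
  assumes q: "qh qd M e"
  shows "comm (half_qdeg qd) M = (real_of_int e / 2) *\<^sub>R M"
proof -
  have "comm (half_qdeg qd) M $ i $ j = ((real_of_int e / 2) *\<^sub>R M) $ i $ j" for i j
  proof (cases "M $ i $ j = 0")
    case True then show ?thesis by (simp add: scale_entry comm_H_entry)
  next
    case False
    then have "qd i = qd j + e" using q by (simp add: qh_def)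
    then have "complex_of_int (qd i) - complex_of_int (qd j) = complex_of_int e" by simp
    then show ?thesis by (simp add: scale_c comm_H_entry)
  qed
  then show ?thesis by (simp add: vec_eq_iff)
qed

lemma weight_qh:
  assumes "comm (half_qdeg qd) M = (real_of_int e / 2) *\<^sub>R M"
  shows "qh qd M e"
  unfolding qh_def
proof (intro allI impI)
  fix i j assume nz: "M $ i $ j \<noteq> 0"
  have "(of_int (qd i) - of_int (qd j)) / 2 * M $ i $ j = complex_of_real (real_of_int e / 2) * M $ i $ j"
    using arg_cong[OF assms, of "\<lambda>X. X $ i $ j"] by (simp only: comm_H_entry scale_entry)
  with nz have "(of_int (qd i) - of_int (qd j)) / 2 = complex_of_real (real_of_int e / 2)" by simp
  moreover have "complex_of_real (real_of_int e / 2) = complex_of_int e / 2" by simp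
  ultimately have h: "(complex_of_int (qd i) - complex_of_int (qd j)) / 2 = complex_of_int e / 2" by simp
  have "complex_of_int (qd i) - complex_of_int (qd j) = 2 * ((complex_of_int (qd i) - complex_of_int (qd j)) / 2)" by simp
  also have "\<dots> = complex_of_int e" unfolding h by simp
  finally have "complex_of_int (qd i) - complex_of_int (qd j) = complex_of_int e" .
  then have "complex_of_int (qd i - qd j) = complex_of_int e" by (simp only: of_int_diff)
  then have "qd i - qd j = e" by (simp only: of_int_eq_iff)
  then show "qd i = qd j + e" by simp
qed

lemma qh_zero:
  assumes "qh qd M e" "\<And>i j. qd i \<noteq> qd j + e"
  shows "M = 0"
  using assms unfolding qh_def vec_eq_iff by auto

locale sl2ctx =
  fixes qd ad td :: "'n::finite \<Rightarrow> int"
    and E F H dN :: "'n op"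
    and N :: nat
  assumes N: "N \<ge> 1"
    and Hdef: "H = half_qdeg qd"
    and EF: "comm E F = H"
    and HE: "comm H E = smat 2 E"
    and HF: "comm H F = smat (-2) F"
    and E_deg: "homog qd ad td E 4 0 (-4)"
    and F_deg: "homog qd ad td F (-4) 0 4"
    and dN_deg: "homog qd ad td dN (2 * int N) (-2) 0"
    and E_dN: "comm E dN = 0"
begin

definition w :: "nat \<Rightarrow> 'n op" where "w k = (comm F ^^ k) dN"

lemma qhE: "qh qd E 4" using homog_qh[OF E_deg] .
lemma qhF: "qh qd F (-4)" using homog_qh[OF F_deg] .
lemma qhd: "qh qd dN (2 * int N)" using homog_qh[OF dN_deg] .

lemma w0: "w 0 = dN" by (simp add: w_def)
lemma w_Suc: "w (Suc k) = comm F (w k)" by (simp add: w_def)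

lemma qh_w: "qh qd (w k) (2 * int N - 4 * int k)"
proof (induction k)
  case 0 then show ?case using qhd by (simp add: w0)
next
  case (Suc k)
  have "qh qd (comm F (w k)) (-4 + (2 * int N - 4 * int k))" by (rule qh_comm[OF qhF Suc])
  then show ?case by (simp add: w_Suc algebra_simps)
qed

lemma H_qh: "qh qd M e \<Longrightarrow> comm H M = (real_of_int e / 2) *\<^sub>R M"
  using qh_comm_H Hdef by blast

lemma H_w: "comm H (w k) = (real N - 2 * real k) *\<^sub>R w k"
  using H_qh[OF qh_w[of k]] by simp

lemma E_w0: "comm E (w 0) = 0" using E_dN by (simp add: w0)

lemma E_wS: "comm E (w (Suc k)) = (real (Suc k) * (real N - real k)) *\<^sub>R w k"
proof (induction k)
  case 0
  have "comm E (w (Suc 0)) = comm (comm E F) dN + comm F (comm E dN)"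
    unfolding w_Suc w0 by (rule jacobi)
  also have "\<dots> = real N *\<^sub>R w 0" using E_dN EF H_w[of 0] by (simp add: w0 comm_zero_r)
  finally show ?case by simp
next
  case (Suc k)
  have "comm E (w (Suc (Suc k))) = comm (comm E F) (w (Suc k)) + comm F (comm E (w (Suc k)))"
    unfolding w_Suc[of "Suc k"] by (rule jacobi)
  also have "\<dots> = (real N - 2 * real (Suc k)) *\<^sub>R w (Suc k) + (real (Suc k) * (real N - real k)) *\<^sub>R w (Suc k)"
    using EF H_w[of "Suc k"] Suc by (simp add: comm_scale_r w_Suc)
  also have "\<dots> = ((real N - 2 * real (Suc k)) + (real (Suc k) * (real N - real k))) *\<^sub>R w (Suc k)"
    by (simp add: scaleR_add_left)
  also have "(real N - 2 * real (Suc k)) + (real (Suc k) * (real N - real k)) = real (Suc (Suc k)) * (real N - real (Suc k))"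
    by (simp add: algebra_simps)
  finally show ?case .
qed

lemma w_large: "\<exists>K. \<forall>k\<ge>K. w k = 0"
proof -
  obtain B where B: "\<And>i. \<bar>qd i\<bar> \<le> B"
    using finite_imageI[OF finite[of UNIV], of "\<lambda>i. \<bar>qd i\<bar>"]
    by (metis Max_ge rangeI)
  have "w k = 0" if "k \<ge> N + nat B + 1" for k
  proof (rule qh_zero[OF qh_w])
    fix i j
    have "\<bar>qd i\<bar> \<le> B" "\<bar>qd j\<bar> \<le> B" using B by auto
    moreover have "int k \<ge> int N + B + 1" using that by linarith
    ultimately show "qd i \<noteq> qd j + (2 * int N - 4 * int k)" by linarith
  qed
  then show ?thesis by blast
qed

lemma w_vanish: "k > N \<Longrightarrow> w k = 0"
proof -
  assume kN: "k > N"
  obtain K where K: "\<And>k. k \<ge> K \<Longrightarrow> w k = 0" using w_large by blast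
  have "w k = 0" if "N + 1 \<le> k" "k \<le> max K (N+1)" for k
    using that(2,1)
  proof (induction k rule: inc_induct)
    case base then show ?case using K by simp
  next
    case (step m)
    have "(real (Suc m) * (real N - real m)) *\<^sub>R w m = 0"
      using E_wS[of m] step by (simp add: comm_zero_r)
    moreover have "real (Suc m) * (real N - real m) \<noteq> 0" using step by simp
    ultimately show ?case by simp
  qed
  then show ?thesis using kN K by (cases "k \<le> max K (N+1)") auto
qed

end

lemma smat_nat: "smat (of_nat k) M = real k *\<^sub>R M"
  using smat_real[of "real k" M] by simp
lemma smat_int: "smat (of_int k) M = real_of_int k *\<^sub>R M"
  using smat_real[of "real_of_int k" M] by simp

lemma adp_scale: "(comm X ^^ j) (r *\<^sub>R Y) = r *\<^sub>R (comm X ^^ j) Y"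
  using linear_adp[where X=X and j=j] by (simp add: linear_scale)
lemma adp_zero: "(comm X ^^ j) 0 = 0"
  using linear_adp[where X=X and j=j] by (simp add: linear_0)

lemma linear_pres_span:
  assumes "linear f" "\<And>v. v \<in> S \<Longrightarrow> f v \<in> span S" "y \<in> span S"
  shows "f y \<in> span S"
proof -
  have "f ` span S = span (f ` S)" by (simp add: span_linear_image[OF assms(1)])
  also have "\<dots> \<subseteq> span (span S)" by (rule span_mono) (use assms(2) in auto)
  finally show ?thesis using assms(3) by (auto simp: span_span)
qed

context sl2ctx begin

definition dd :: "nat \<Rightarrow> nat \<Rightarrow> 'n op" where
  "dd a b = (fact a / fact N) *\<^sub>R w b"

lemma dd_N0: "dd N 0 = dN" by (simp add: dd_def w0)

lemma dd_E:
  assumes "a + b = N"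
  shows "comm E (dd a b) = smat (of_nat b) (dd (a + 1) (b - 1))"
proof (cases b)
  case 0 then show ?thesis by (simp add: dd_def comm_scale_r E_w0 smat_def vec_eq_iff)
next
  case (Suc b')
  have r: "real N - real b' = real a + 1" using assms Suc by simp
  have "comm E (dd a b) = (fact a / fact N * (real (Suc b') * (real N - real b'))) *\<^sub>R w b'"
    by (simp add: dd_def comm_scale_r Suc E_wS)
  also have "fact a / fact N * (real (Suc b') * (real N - real b')) = real b * (fact (a + 1) / fact N)"
    unfolding r using Suc by (simp add: field_simps)
  moreover have "smat (of_nat b) (dd (a + 1) (b - 1)) = real b *\<^sub>R dd (a + 1) (b - 1)" by (rule smat_nat)
  ultimately show ?thesis by (simp add: dd_def Suc)
qed

lemma dd_F:
  assumes "a + b = N"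
  shows "comm F (dd a b) = smat (of_nat a) (dd (a - 1) (b + 1))"
proof (cases a)
  case 0
  then have "b = N" using assms by simp
  then have "comm F (w b) = 0" using w_vanish[of "Suc N"] by (simp add: w_Suc[symmetric])
  then show ?thesis using 0 by (simp add: dd_def comm_scale_r smat_def vec_eq_iff)
next
  case (Suc a')
  have "comm F (dd a b) = (fact a / fact N) *\<^sub>R w (b + 1)"
    by (simp add: dd_def comm_scale_r w_Suc)
  also have "fact a / fact N = real a * (fact (a - 1) / fact N)"
    using Suc by (simp add: field_simps)
  moreover have "smat (of_nat a) (dd (a - 1) (b + 1)) = real a *\<^sub>R dd (a - 1) (b + 1)" by (rule smat_nat)
  ultimately show ?thesis by (simp add: dd_def)
qed

lemma dd_H:
  assumes "a + b = N"
  shows "comm H (dd a b) = smat (of_int (int a - int b)) (dd a b)"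
proof -
  have "real N - 2 * real b = real_of_int (int a - int b)" using assms by simp
  moreover have "smat (of_int (int a - int b)) (dd a b) = real_of_int (int a - int b) *\<^sub>R dd a b" by (rule smat_int)
  ultimately show ?thesis by (simp add: dd_def comm_scale_r H_w)
qed

definition WW :: "'n op set" where "WW = w ` {..N}"

lemma w_in: "w k \<in> span WW"
  by (cases "k \<le> N") (auto simp: WW_def w_vanish span_zero intro: span_base)

lemma WW_elem: "v \<in> WW \<Longrightarrow> \<exists>k. v = w k \<and> k \<le> N"
  by (auto simp: WW_def)

lemma F_span: "Y \<in> span WW \<Longrightarrow> comm F Y \<in> span WW"
proof (rule linear_pres_span[OF linear_comm])
  fix v assume "v \<in> WW"
  then obtain k where v: "v = w k" using WW_elem by blast
  show "comm F v \<in> span WW" unfolding v w_Suc[symmetric] by (rule w_in)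
qed

lemma E_span: "Y \<in> span WW \<Longrightarrow> comm E Y \<in> span WW"
proof (rule linear_pres_span[OF linear_comm])
  fix v assume "v \<in> WW"
  then obtain k where v: "v = w k" using WW_elem by blast
  show "comm E v \<in> span WW"
  proof (cases k)
    case 0 then show ?thesis using v E_w0 by (simp add: span_zero)
  next
    case (Suc k') then show ?thesis using v E_wS by (simp add: span_scale w_in)
  qed
qed

lemma adp_span:
  assumes "\<And>Y. Y \<in> span WW \<Longrightarrow> comm X Y \<in> span WW"
  shows "Y \<in> span WW \<Longrightarrow> (comm X ^^ j) Y \<in> span WW"
  by (induction j) (auto intro: assms)

lemma adF_w: "(comm F ^^ j) (w k) = w (j + k)"
  by (induction j) (simp_all add: w_Suc)

lemma adE_w: "j > k \<Longrightarrow> (comm E ^^ j) (w k) = 0"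
proof (induction k arbitrary: j)
  case 0
  then obtain j' where j: "j = Suc j'" by (cases j) auto
  show ?case unfolding j funpow_Suc_right o_def E_w0 adp_zero ..
next
  case (Suc k)
  then obtain j' where j: "j = Suc j'" "j' > k" by (cases j) auto
  show ?case unfolding j funpow_Suc_right o_def E_wS adp_scale using Suc.IH[OF j(2)] by simp
qed

lemma adF_nil: "Y \<in> span WW \<Longrightarrow> (comm F ^^ Suc N) Y = 0"
proof (rule linear_eq_0_on_span[OF linear_adp])
  fix v assume "v \<in> WW"
  then obtain k where v: "v = w k" using WW_elem by blast
  show "(comm F ^^ Suc N) v = 0" unfolding v adF_w by (rule w_vanish) simp
qed

lemma adE_nil: "Y \<in> span WW \<Longrightarrow> (comm E ^^ Suc N) Y = 0"
proof (rule linear_eq_0_on_span[OF linear_adp])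
  fix v assume "v \<in> WW"
  then obtain k where v: "v = w k" "k \<le> N" using WW_elem by blast
  show "(comm E ^^ Suc N) v = 0" unfolding v(1) by (rule adE_w) (use v(2) in simp)
qed

end

lemma mpow_add: "mpow X (a + b) = mpow X a ** mpow X b"
  by (induction a) (simp_all add: matrix_mul_assoc)

lemma pascal_sum:
  fixes g :: "nat \<Rightarrow> nat \<Rightarrow> 'a::real_vector"
  shows "(\<Sum>j\<le>Suc m. real (Suc m choose j) *\<^sub>R g j (Suc m - j)) =
         (\<Sum>j\<le>m. real (m choose j) *\<^sub>R g (Suc j) (m - j)) + (\<Sum>j\<le>m. real (m choose j) *\<^sub>R g j (Suc m - j))"
proof -
  have s1: "(\<Sum>j\<le>Suc m. real (Suc m choose j) *\<^sub>R g j (Suc m - j)) =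
        g 0 (Suc m) + (\<Sum>j\<le>m. real (Suc m choose Suc j) *\<^sub>R g (Suc j) (m - j))"
    by (subst sum.atMost_Suc_shift) simp
  have s2: "(\<Sum>j\<le>m. real (Suc m choose Suc j) *\<^sub>R g (Suc j) (m - j)) =
      (\<Sum>j\<le>m. real (m choose j) *\<^sub>R g (Suc j) (m - j)) + (\<Sum>j\<le>m. real (m choose Suc j) *\<^sub>R g (Suc j) (m - j))"
    by (simp add: scaleR_add_left sum.distrib)
  have s3: "(\<Sum>j\<le>m. real (m choose j) *\<^sub>R g j (Suc m - j)) = (\<Sum>j\<le>Suc m. real (m choose j) *\<^sub>R g j (Suc m - j))"
    by simp
  have s4: "(\<Sum>j\<le>Suc m. real (m choose j) *\<^sub>R g j (Suc m - j)) = g 0 (Suc m) + (\<Sum>j\<le>m. real (m choose Suc j) *\<^sub>R g (Suc j) (m - j))"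
    by (subst sum.atMost_Suc_shift) simp
  show ?thesis unfolding s1 s2 s3 s4 by (simp add: algebra_simps)
qed

lemma leibniz:
  "mpow X m ** Y = (\<Sum>j\<le>m. real (m choose j) *\<^sub>R ((comm X ^^ j) Y ** mpow X (m - j)))"
proof (induction m)
  case 0 then show ?case by simp
next
  case (Suc m)
  let ?A = "\<lambda>j. (comm X ^^ j) Y"
  have "mpow X (Suc m) ** Y = X ** (mpow X m ** Y)" by (simp add: matrix_mul_assoc)
  also have "\<dots> = (\<Sum>j\<le>m. real (m choose j) *\<^sub>R ((X ** ?A j) ** mpow X (m - j)))"
    unfolding Suc by (simp add: mm_sum_r mm_scale_r matrix_mul_assoc)
  also have "\<dots> = (\<Sum>j\<le>m. real (m choose j) *\<^sub>R (?A (Suc j) ** mpow X (m - j)))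
                 + (\<Sum>j\<le>m. real (m choose j) *\<^sub>R (?A j ** mpow X (Suc m - j)))"
  proof -
    have "X ** ?A j = ?A (Suc j) + ?A j ** X" for j by (simp add: comm_def)
    moreover have "(?A j ** X) ** mpow X (m - j) = ?A j ** mpow X (Suc m - j)" if "j \<le> m" for j
      using that by (simp add: matrix_mul_assoc[symmetric] Suc_diff_le)
    ultimately show ?thesis
      by (simp add: mm_add_l scaleR_add_right sum.distrib)
  qed
  also have "\<dots> = (\<Sum>j\<le>Suc m. real (Suc m choose j) *\<^sub>R (?A j ** mpow X (Suc m - j)))"
    by (rule pascal_sum[symmetric])
  finally show ?case .
qed

definition sraise :: "('n::finite \<Rightarrow> int) \<Rightarrow> 'n op \<Rightarrow> bool" where
  "sraise om X \<longleftrightarrow> (\<forall>i j. X $ i $ j \<noteq> 0 \<longrightarrow> om j < om i)"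

lemma mpow_chain:
  assumes "sraise om X"
  shows "mpow X k $ i $ j \<noteq> 0 \<Longrightarrow> om j \<le> om i \<and> k + 1 \<le> card {l. om j \<le> om l \<and> om l \<le> om i}"
proof (induction k arbitrary: i)
  case 0
  then have "i = j" by (auto simp: mat_def split: if_splits)
  then have "{l. om j \<le> om l \<and> om l \<le> om i} \<noteq> {}" by auto
  then show ?case using \<open>i = j\<close> by (simp add: card_gt_0_iff Suc_le_eq)
next
  case (Suc k)
  then obtain l where l: "X $ i $ l \<noteq> 0" "mpow X k $ l $ j \<noteq> 0" using mm_nz by fastforce
  have lt: "om l < om i" using l(1) assms by (simp add: sraise_def)
  from Suc.IH[OF l(2)] have ih: "om j \<le> om l" "k + 1 \<le> card {m. om j \<le> om m \<and> om m \<le> om l}" by auto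
  have sub: "insert i {m. om j \<le> om m \<and> om m \<le> om l} \<subseteq> {m. om j \<le> om m \<and> om m \<le> om i}"
    using lt ih by auto
  have "i \<notin> {m. om j \<le> om m \<and> om m \<le> om l}" using lt by auto
  then have "card (insert i {m. om j \<le> om m \<and> om m \<le> om l}) = Suc (card {m. om j \<le> om m \<and> om m \<le> om l})"
    by simp
  moreover have "card (insert i {m. om j \<le> om m \<and> om m \<le> om l}) \<le> card {m. om j \<le> om m \<and> om m \<le> om i}"
    by (rule card_mono[OF _ sub]) simp
  ultimately show ?case using ih lt by simp
qed

lemma mpow_nil:
  assumes "sraise om (X::'n::finite op)" "k \<ge> CARD('n)"
  shows "mpow X k = 0"
proof -
  have "mpow X k $ i $ j = 0" for i j
  proof (rule ccontr)
    assume "mpow X k $ i $ j \<noteq> 0"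
    from mpow_chain[OF assms(1) this] have "k + 1 \<le> card {l. om j \<le> om l \<and> om l \<le> om i}" by simp
    moreover have "card {l. om j \<le> om l \<and> om l \<le> om i} \<le> CARD('n)" by (rule card_mono) auto
    ultimately show False using assms(2) by simp
  qed
  then show ?thesis by (simp add: vec_eq_iff)
qed

lemma mpow_raise:
  assumes "sraise om X" "k \<ge> 1" "mpow X k $ i $ j \<noteq> 0"
  shows "om j < om i"
proof -
  obtain k' where k: "k = Suc k'" using assms(2) by (cases k) auto
  obtain l where l: "X $ i $ l \<noteq> 0" "mpow X k' $ l $ j \<noteq> 0" using mm_nz assms(3) k by fastforce
  have "om l < om i" using l(1) assms(1) by (simp add: sraise_def)
  moreover have "om j \<le> om l" using mpow_chain[OF assms(1) l(2)] by simp
  ultimately show ?thesis by simp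
qed

lemma smat_inv_fact: "smat (inverse (fact k)) M = inverse (fact k) *\<^sub>R M"
proof -
  have "(inverse (fact k) :: complex) = of_real (inverse (fact k))" by (simp add: of_real_inverse)
  then show ?thesis using smat_real by metis
qed

lemma nexp_alt: "nexp X = (\<Sum>k\<le>CARD('n). inverse (fact k) *\<^sub>R mpow (X::'n::finite op) k)"
  by (simp add: nexp_def smat_inv_fact)

lemma nexp_entry:
  assumes "sraise om (X::'n::finite op)" "\<not> om j < om i"
  shows "nexp X $ i $ j = (if i = j then 1 else 0)"
proof -
  have "nexp X $ i $ j = (\<Sum>k\<le>CARD('n). (inverse (fact k) *\<^sub>R mpow X k) $ i $ j)"
    by (simp add: nexp_alt sum_component)
  also have "\<dots> = (inverse (fact 0) *\<^sub>R mpow X 0) $ i $ j + (\<Sum>k\<in>{..CARD('n)} - {0}. (inverse (fact k) *\<^sub>R mpow X k) $ i $ j)"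
    by (rule sum.remove) auto
  also have "(\<Sum>k\<in>{..CARD('n)} - {0}. (inverse (fact k) *\<^sub>R mpow X k) $ i $ j) = 0"
  proof (rule sum.neutral)
    show "\<forall>k\<in>{..CARD('n)} - {0}. (inverse (fact k) *\<^sub>R mpow X k) $ i $ j = 0"
    proof
      fix k assume "k \<in> {..CARD('n)} - {0}"
      then have "k \<ge> 1" by auto
      then have "mpow X k $ i $ j = 0" using mpow_raise[OF assms(1)] assms(2) by blast
      then show "(inverse (fact k) *\<^sub>R mpow X k) $ i $ j = 0" by simp
    qed
  qed
  finally show ?thesis by (simp add: mat_def)
qed

lemma nexp_ker:
  assumes "sraise om (X::'n::finite op)" "nexp X *v x = 0"
  shows "x = 0"
proof (rule ccontr)
  assume "x \<noteq> 0"
  define S where "S = {j. x $ j \<noteq> 0}"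
  have "S \<noteq> {}" using \<open>x \<noteq> 0\<close> by (auto simp: S_def vec_eq_iff)
  then have "Min (om ` S) \<in> om ` S" by (intro Min_in) auto
  then obtain i where i: "i \<in> S" "om i = Min (om ` S)" by auto
  have mn: "om i \<le> om j" if "j \<in> S" for j using i that by simp
  have "(nexp X *v x) $ i = (\<Sum>j\<in>UNIV. nexp X $ i $ j * x $ j)"
    by (simp add: matrix_vector_mult_def)
  also have "\<dots> = (\<Sum>j\<in>UNIV. if j = i then x $ i else 0)"
  proof (rule sum.cong)
    fix j
    show "nexp X $ i $ j * x $ j = (if j = i then x $ i else 0)"
    proof (cases "x $ j = 0")
      case True then show ?thesis using i(1) by (auto simp: S_def)
    next
      case False
      then have "om i \<le> om j" using mn by (simp add: S_def)
      then show ?thesis using nexp_entry[OF assms(1), where i=i and j=j] by auto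
    qed
  qed simp
  also have "\<dots> = x $ i" by simp
  finally show False using assms(2) i(1) by (simp add: S_def)
qed

lemma nexp_inv:
  assumes "sraise om (X::'n::finite op)"
  shows "\<exists>B. B ** nexp X = mat 1 \<and> nexp X ** B = mat 1"
proof -
  have "\<exists>B. B ** nexp X = mat 1"
    unfolding matrix_left_invertible_ker using nexp_ker[OF assms] by blast
  then show ?thesis using matrix_left_right_inverse by blast
qed

lemma nexp_trunc:
  assumes nil: "\<And>k. k \<ge> CARD('n) \<Longrightarrow> mpow (X::'n::finite op) k = 0" and M: "M \<ge> CARD('n)"
  shows "nexp X = (\<Sum>k\<le>M. inverse (fact k) *\<^sub>R mpow X k)"
  unfolding nexp_alt
  by (rule sum.mono_neutral_left) (use M nil in auto)

lemma double_sum: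
  fixes h :: "nat \<Rightarrow> nat \<Rightarrow> 'a::comm_monoid_add"
  shows "(\<Sum>m\<le>M. \<Sum>j\<le>m. h j (m - j)) = (\<Sum>j\<le>M. \<Sum>l\<le>M - j. h j l)"
proof (induction M)
  case 0 then show ?case by simp
next
  case (Suc M)
  have r: "(\<Sum>j\<le>Suc M. \<Sum>l\<le>Suc M - j. h j l) = (\<Sum>j\<le>M. \<Sum>l\<le>Suc M - j. h j l) + h (Suc M) 0"
    by (simp only: sum.atMost_Suc diff_self_eq_0) simp
  have "(\<Sum>j\<le>M. \<Sum>l\<le>Suc M - j. h j l) = (\<Sum>j\<le>M. (\<Sum>l\<le>M - j. h j l) + h j (Suc M - j))"
  proof (rule sum.cong)
    fix j assume "j \<in> {..M}"
    then have "Suc M - j = Suc (M - j)" by auto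
    then show "(\<Sum>l\<le>Suc M - j. h j l) = (\<Sum>l\<le>M - j. h j l) + h j (Suc M - j)" by simp
  qed simp
  then have r2: "(\<Sum>j\<le>Suc M. \<Sum>l\<le>Suc M - j. h j l) = (\<Sum>j\<le>M. \<Sum>l\<le>M - j. h j l) + ((\<Sum>j\<le>M. h j (Suc M - j)) + h (Suc M) 0)"
    unfolding r by (simp only: sum.distrib add.assoc)
  have l: "(\<Sum>m\<le>Suc M. \<Sum>j\<le>m. h j (m - j)) = (\<Sum>m\<le>M. \<Sum>j\<le>m. h j (m - j)) + ((\<Sum>j\<le>M. h j (Suc M - j)) + h (Suc M) 0)"
    by (simp only: sum.atMost_Suc[of _ M] sum.atMost_Suc[of "\<lambda>j. h j (Suc M - j)" M] diff_self_eq_0)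
  show ?case unfolding l r2 Suc ..
qed

lemma adp_beyond:
  assumes "(comm X ^^ Suc J) Y = 0" "j > J"
  shows "(comm X ^^ j) Y = 0"
proof -
  define t where "t = j - Suc J"
  have j: "j = t + Suc J" using assms(2) by (simp add: t_def)
  show ?thesis unfolding j funpow_add o_def assms(1) adp_zero ..
qed

lemma exp_conj:
  assumes nil: "\<And>k. k \<ge> CARD('n) \<Longrightarrow> mpow (X::'n::finite op) k = 0"
    and J: "(comm X ^^ Suc J) Y = 0"
  shows "nexp X ** Y = (\<Sum>j\<le>J. inverse (fact j) *\<^sub>R (comm X ^^ j) Y) ** nexp X"
proof -
  define M where "M = J + CARD('n)"
  define a where "a j = inverse (fact j) *\<^sub>R (comm X ^^ j) Y" for j
  define b where "b l = inverse (fact l) *\<^sub>R mpow X l" for l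
  have "nexp X ** Y = (\<Sum>m\<le>M. b m) ** Y"
    unfolding b_def by (rule arg_cong[where f="\<lambda>Z. Z ** Y"], rule nexp_trunc[OF nil]) (auto simp: M_def)
  also have "\<dots> = (\<Sum>m\<le>M. inverse (fact m) *\<^sub>R (mpow X m ** Y))"
    by (simp add: mm_sum_l mm_scale_l b_def)
  also have "\<dots> = (\<Sum>m\<le>M. \<Sum>j\<le>m. a j ** b (m - j))"
  proof (rule sum.cong)
    fix m
    have "inverse (fact m) *\<^sub>R (mpow X m ** Y) =
          (\<Sum>j\<le>m. (inverse (fact m) * real (m choose j)) *\<^sub>R ((comm X ^^ j) Y ** mpow X (m - j)))"
      unfolding leibniz by (simp add: scaleR_sum_right)
    also have "\<dots> = (\<Sum>j\<le>m. a j ** b (m - j))"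
    proof (rule sum.cong)
      fix j assume "j \<in> {..m}"
      then have jm: "j \<le> m" by simp
      have "inverse (fact m) * real (m choose j) = inverse (fact j) * inverse (fact (m - j))"
        using binomial_fact[OF jm, where 'a=real] by (simp add: field_simps)
      then show "(inverse (fact m) * real (m choose j)) *\<^sub>R ((comm X ^^ j) Y ** mpow X (m - j)) = a j ** b (m - j)"
        by (simp add: a_def b_def mm_scale_l mm_scale_r)
    qed simp
    finally show "inverse (fact m) *\<^sub>R (mpow X m ** Y) = (\<Sum>j\<le>m. a j ** b (m - j))" .
  qed simp
  also have "\<dots> = (\<Sum>j\<le>M. \<Sum>l\<le>M - j. a j ** b l)"
    by (rule double_sum)
  also have "\<dots> = (\<Sum>j\<le>M. a j ** (\<Sum>l\<le>M - j. b l))"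
    by (simp add: mm_sum_r)
  also have "\<dots> = (\<Sum>j\<le>J. a j ** (\<Sum>l\<le>M - j. b l))"
  proof (rule sum.mono_neutral_right)
    show "\<forall>j\<in>{..M} - {..J}. a j ** (\<Sum>l\<le>M - j. b l) = 0"
      using adp_beyond[OF J] by (auto simp: a_def)
  qed (auto simp: M_def)
  also have "\<dots> = (\<Sum>j\<le>J. a j ** nexp X)"
  proof (rule sum.cong)
    fix j assume "j \<in> {..J}"
    then have "M - j \<ge> CARD('n)" by (auto simp: M_def)
    then show "a j ** (\<Sum>l\<le>M - j. b l) = a j ** nexp X"
      unfolding b_def using nexp_trunc[OF nil] by simp
  qed simp
  also have "\<dots> = (\<Sum>j\<le>J. a j) ** nexp X" by (simp add: mm_sum_l)
  finally show ?thesis by (simp add: a_def)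
qed

definition qproj :: "('n::finite \<Rightarrow> int) \<Rightarrow> int \<Rightarrow> 'n op \<Rightarrow> 'n op" where
  "qproj qd e M = (\<chi> i j. if qd i = qd j + e then M $ i $ j else 0)"

lemma linear_qproj: "linear (qproj qd e)"
  by (rule linearI) (simp_all add: qproj_def vec_eq_iff)

lemma qproj_same: "qh qd M e \<Longrightarrow> qproj qd e M = M"
  by (auto simp: qproj_def qh_def vec_eq_iff)

lemma qproj_other: "qh qd M f \<Longrightarrow> f \<noteq> e \<Longrightarrow> qproj qd e M = 0"
proof -
  assume q: "qh qd M f" and fe: "f \<noteq> e"
  have "(if qd i = qd j + e then M $ i $ j else 0) = 0" for i j
  proof (cases "M $ i $ j = 0")
    case False
    then have "qd i = qd j + f" using q by (simp add: qh_def)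
    then have "qd i \<noteq> qd j + e" using fe by simp
    then show ?thesis by simp
  qed simp
  then show ?thesis by (simp add: qproj_def vec_eq_iff)
qed

lemma adp_neg: "(comm (- X) ^^ j) Y = ((-1) ^ j) *\<^sub>R (comm X ^^ j) Y"
  by (induction j) (simp_all add: comm_neg_l comm_scale_r)

context sl2ctx begin

lemma HE': "comm H E = 2 *\<^sub>R E" using HE smat_real[of 2 E] by simp
lemma HF': "comm H F = (-2) *\<^sub>R F" using HF smat_real[of "-2" F] by simp
lemma cEH: "comm E H = - (2 *\<^sub>R E)" using HE' comm_anti[of E H] by simp
lemma cFH: "comm F H = 2 *\<^sub>R F" using HF' comm_anti[of F H] by simp
lemma cFE: "comm F E = - H" using EF comm_anti[of F E] by simp

lemma sraiseE: "sraise qd E"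
  using qhE by (auto simp: sraise_def qh_def)
lemma sraiseF: "sraise (\<lambda>i. - qd i) (- F)"
  using qhF by (auto simp: sraise_def qh_def)

lemma nilE: "k \<ge> CARD('n) \<Longrightarrow> mpow E k = 0" using mpow_nil[OF sraiseE] .
lemma nilF: "k \<ge> CARD('n) \<Longrightarrow> mpow (- F) k = 0" using mpow_nil[OF sraiseF] .

lemma conj_gen:
  assumes nil: "\<And>k. k \<ge> CARD('n) \<Longrightarrow> mpow X k = 0"
    and sp: "\<And>Y. Y \<in> span WW \<Longrightarrow> comm X Y \<in> span WW"
    and nl: "\<And>Y. Y \<in> span WW \<Longrightarrow> (comm X ^^ Suc N) Y = 0"
    and Y: "Y \<in> span WW"
  shows "\<exists>Y'\<in>span WW. nexp X ** Y = Y' ** nexp X"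
proof
  show "nexp X ** Y = (\<Sum>j\<le>N. inverse (fact j) *\<^sub>R (comm X ^^ j) Y) ** nexp X"
    by (rule exp_conj[OF nil nl[OF Y]])
  show "(\<Sum>j\<le>N. inverse (fact j) *\<^sub>R (comm X ^^ j) Y) \<in> span WW"
    by (intro span_sum span_scale adp_span[OF sp Y]) auto
qed

lemma conjE: "Y \<in> span WW \<Longrightarrow> \<exists>Y'\<in>span WW. nexp E ** Y = Y' ** nexp E"
  by (rule conj_gen[OF nilE E_span adE_nil])

lemma conjF: "Y \<in> span WW \<Longrightarrow> \<exists>Y'\<in>span WW. nexp (- F) ** Y = Y' ** nexp (- F)"
proof (rule conj_gen[OF nilF])
  fix Y assume "Y \<in> span WW"
  then show "comm (- F) Y \<in> span WW" by (simp add: comm_neg_l span_neg F_span)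
next
  fix Y assume "Y \<in> span WW"
  then show "(comm (- F) ^^ Suc N) Y = 0" by (simp only: adp_neg adF_nil scaleR_zero_right)
qed

end

context sl2ctx begin

abbreviation "S \<equiv> sl2_sym E F"

lemma step1: "nexp E ** H = (H - 2 *\<^sub>R E) ** nexp E"
proof -
  have "(comm E ^^ Suc 0) (comm E H) = 0" by (simp add: cEH comm_neg_r comm_scale_r comm_self)
  then have "(comm E ^^ Suc (Suc 0)) H = 0" by (simp only: funpow_Suc_right o_def)
  from exp_conj[OF nilE this] show ?thesis by (simp add: cEH)
qed

lemma step2: "nexp (- F) ** (H - 2 *\<^sub>R E) = (- H - 2 *\<^sub>R E) ** nexp (- F)"
proof -
  have c1: "comm (- F) (H - 2 *\<^sub>R E) = - (2 *\<^sub>R F) - 2 *\<^sub>R H"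
    by (simp add: comm_neg_l comm_diff_r comm_scale_r cFH cFE)
  have c2: "comm (- F) (- (2 *\<^sub>R F) - 2 *\<^sub>R H) = 4 *\<^sub>R F"
    by (simp add: comm_neg_l comm_diff_r comm_neg_r comm_scale_r cFH comm_self)
  have c3: "comm (- F) (4 *\<^sub>R F) = 0"
    by (simp add: comm_neg_l comm_scale_r comm_self)
  have "(comm (- F) ^^ Suc (Suc (Suc 0))) (H - 2 *\<^sub>R E) = 0"
    by (simp only: funpow_Suc_right o_def funpow_0 c1 c2 c3)
  from exp_conj[OF nilF this]
  have "nexp (- F) ** (H - 2 *\<^sub>R E) = (\<Sum>j\<le>Suc (Suc 0). inverse (fact j) *\<^sub>R (comm (- F) ^^ j) (H - 2 *\<^sub>R E)) ** nexp (- F)" .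
  also have "(\<Sum>j\<le>Suc (Suc 0). inverse (fact j) *\<^sub>R (comm (- F) ^^ j) (H - 2 *\<^sub>R E)) =
      (H - 2 *\<^sub>R E) + (- (2 *\<^sub>R F) - 2 *\<^sub>R H) + inverse 2 *\<^sub>R (4 *\<^sub>R F)"
    by (simp only: sum.atMost_Suc atMost_0 sum.empty funpow_Suc_right o_def funpow_0 c1 c2 fact_0 fact_Suc) simp
  also have "(H - 2 *\<^sub>R E) + (- (2 *\<^sub>R F) - 2 *\<^sub>R H) + inverse 2 *\<^sub>R (4 *\<^sub>R F) = - H - 2 *\<^sub>R E"
  proof -
    have "inverse 2 *\<^sub>R (4 *\<^sub>R F) = 2 *\<^sub>R F" by simp
    moreover have "H - 2 *\<^sub>R H = - H" by (simp add: scaleR_2)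
    ultimately show ?thesis by (simp add: algebra_simps)
  qed
  finally show ?thesis .
qed

lemma step3: "nexp E ** (- H - 2 *\<^sub>R E) = (- H) ** nexp E"
proof -
  have c1: "comm E (- H - 2 *\<^sub>R E) = 2 *\<^sub>R E"
    by (simp add: comm_neg_r comm_diff_r comm_scale_r cEH comm_self)
  have "(comm E ^^ Suc (Suc 0)) (- H - 2 *\<^sub>R E) = 0"
    by (simp only: funpow_Suc_right o_def funpow_0 c1) (simp add: comm_scale_r comm_self)
  from exp_conj[OF nilE this] show ?thesis by (simp add: c1)
qed

lemma SH: "S ** H = - (H ** S)"
proof -
  have "S ** H = (nexp E ** nexp (- F)) ** (nexp E ** H)" by (simp add: sl2_sym_def matrix_mul_assoc)
  also have "\<dots> = (nexp E ** nexp (- F)) ** ((H - 2 *\<^sub>R E) ** nexp E)" by (simp only: step1)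
  also have "\<dots> = nexp E ** (nexp (- F) ** (H - 2 *\<^sub>R E)) ** nexp E" by (simp add: matrix_mul_assoc)
  also have "\<dots> = nexp E ** ((- H - 2 *\<^sub>R E) ** nexp (- F)) ** nexp E" by (simp only: step2)
  also have "\<dots> = (nexp E ** (- H - 2 *\<^sub>R E)) ** (nexp (- F) ** nexp E)" by (simp add: matrix_mul_assoc)
  also have "\<dots> = ((- H) ** nexp E) ** (nexp (- F) ** nexp E)" by (simp only: step3)
  also have "\<dots> = - (H ** S)" by (simp add: sl2_sym_def matrix_mul_assoc mm_neg_l)
  finally show ?thesis .
qed

lemma S_inv: "\<exists>S'. S' ** S = mat 1 \<and> S ** S' = mat 1"
proof -
  have "invertible (nexp E)" using nexp_inv[OF sraiseE] by (auto simp: invertible_def)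
  moreover have "invertible (nexp (- F))" using nexp_inv[OF sraiseF] by (auto simp: invertible_def)
  ultimately have "invertible S" unfolding sl2_sym_def by (intro invertible_mult)
  then show ?thesis by (auto simp: invertible_def)
qed

end

context sl2ctx begin

lemma sym_w:
  assumes b: "b \<le> N"
  shows "\<exists>\<gamma>. S ** w b = \<gamma> *\<^sub>R (w (N - b) ** S)"
proof -
  obtain Y1 where Y1: "Y1 \<in> span WW" "nexp E ** w b = Y1 ** nexp E" using conjE[OF w_in] by blast
  obtain Y2 where Y2: "Y2 \<in> span WW" "nexp (- F) ** Y1 = Y2 ** nexp (- F)" using conjF[OF Y1(1)] by blast
  obtain Y3 where Y3: "Y3 \<in> span WW" "nexp E ** Y2 = Y3 ** nexp E" using conjE[OF Y2(1)] by blast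
  have SY: "S ** w b = Y3 ** S"
  proof -
    have "S ** w b = (nexp E ** nexp (- F)) ** (nexp E ** w b)" by (simp add: sl2_sym_def matrix_mul_assoc)
    also have "\<dots> = (nexp E ** nexp (- F)) ** (Y1 ** nexp E)" by (simp only: Y1(2))
    also have "\<dots> = nexp E ** (nexp (- F) ** Y1) ** nexp E" by (simp add: matrix_mul_assoc)
    also have "\<dots> = nexp E ** (Y2 ** nexp (- F)) ** nexp E" by (simp only: Y2(2))
    also have "\<dots> = (nexp E ** Y2) ** (nexp (- F) ** nexp E)" by (simp add: matrix_mul_assoc)
    also have "\<dots> = (Y3 ** nexp E) ** (nexp (- F) ** nexp E)" by (simp only: Y3(2))
    also have "\<dots> = Y3 ** S" by (simp add: sl2_sym_def matrix_mul_assoc)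
    finally show ?thesis .
  qed
  have HS: "H ** S = - (S ** H)" using SH by simp
  have "comm H Y3 ** S = H ** (Y3 ** S) - Y3 ** (H ** S)"
    by (simp add: comm_def mm_diff_l matrix_mul_assoc)
  also have "\<dots> = (H ** S) ** w b + (Y3 ** S) ** H"
    by (simp add: SY[symmetric] HS mm_neg_r matrix_mul_assoc)
  also have "\<dots> = - (S ** comm H (w b))"
    by (simp add: HS SY[symmetric] mm_neg_l comm_def mm_diff_r matrix_mul_assoc)
  also have "\<dots> = (- (real N - 2 * real b)) *\<^sub>R (Y3 ** S)"
    by (simp add: H_w mm_scale_r SY) (metis minus_diff_eq scaleR_minus_left)
  finally have e1: "comm H Y3 ** S = (- (real N - 2 * real b)) *\<^sub>R (Y3 ** S)" .
  obtain S' where S': "S' ** S = mat 1" "S ** S' = mat 1" using S_inv by blast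
  have "comm H Y3 = (comm H Y3 ** S) ** S'" by (simp add: S'(2) matrix_mul_assoc[symmetric])
  also have "\<dots> = (- (real N - 2 * real b)) *\<^sub>R Y3" unfolding e1
    by (simp add: mm_scale_l S'(2) matrix_mul_assoc[symmetric])
  finally have e2: "comm H Y3 = (- (real N - 2 * real b)) *\<^sub>R Y3" .
  define e where "e = 4 * int b - 2 * int N"
  have "- (real N - 2 * real b) = real_of_int e / 2" by (simp add: e_def)
  then have "comm (half_qdeg qd) Y3 = (real_of_int e / 2) *\<^sub>R Y3" using e2 Hdef by simp
  then have qY: "qh qd Y3 e" by (rule weight_qh)
  have "Y3 = qproj qd e Y3" using qproj_same[OF qY] by simp
  also have "\<dots> \<in> qproj qd e ` span WW" using Y3(1) by blast
  also have "qproj qd e ` span WW = span (qproj qd e ` WW)" by (simp add: span_linear_image[OF linear_qproj])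
  also have "\<dots> \<subseteq> span {w (N - b)}"
  proof (rule span_minimal[OF subsetI subspace_span])
    fix u assume "u \<in> qproj qd e ` WW"
    then obtain k where k: "k \<le> N" "u = qproj qd e (w k)" using WW_elem by blast
    show "u \<in> span {w (N - b)}"
    proof (cases "k = N - b")
      case True
      have "2 * int N - 4 * int k = e" using True b by (simp add: e_def)
      then have "u = w k" using k qproj_same[OF qh_w[of k]] by simp
      then show ?thesis using True by (simp add: span_base)
    next
      case False
      have "2 * int N - 4 * int k \<noteq> e" using False b by (simp add: e_def)
      then have "u = 0" using k qproj_other[OF qh_w[of k]] by simp
      then show ?thesis by (simp add: span_zero)
    qed
  qed
  finally obtain \<gamma> where "Y3 = \<gamma> *\<^sub>R w (N - b)" by (auto simp: span_singleton)
  then show ?thesis using SY by (auto simp: mm_scale_l)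
qed

end

theorem lemma3p27:
  fixes qd ad td :: "'n::finite \<Rightarrow> int"
    and E F H dN :: "'n op"
    and N :: nat
  assumes N: "N \<ge> 1"
    and H_def: "H = half_qdeg qd"
    and EF: "comm E F = H"
    and HE: "comm H E = smat 2 E"
    and HF: "comm H F = smat (-2) F"
    and E_deg: "homog qd ad td E 4 0 (-4)"
    and F_deg: "homog qd ad td F (-4) 0 4"
    and dN_deg: "homog qd ad td dN (2 * int N) (-2) 0"
    and E_dN: "comm E dN = 0"
  shows "\<exists>d :: nat \<Rightarrow> nat \<Rightarrow> 'n op.
           d N 0 = dN \<and>
           (\<forall>a b. a + b = N \<longrightarrow>
              comm E (d a b) = smat (of_nat b) (d (a + 1) (b - 1)) \<and>
              comm F (d a b) = smat (of_nat a) (d (a - 1) (b + 1)) \<and>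
              comm H (d a b) = smat (of_int (int a - int b)) (d a b)) \<and>
           (\<forall>a b. a + b = N \<longrightarrow>
              (\<exists>c. c \<noteq> 0 \<and> sl2_sym E F ** d a b = smat c (d b a ** sl2_sym E F)))"
proof -
  interpret sl2ctx qd ad td E F H dN N
    by (rule sl2ctx.intro) (fact assms)+
  show ?thesis
  proof (intro exI[of _ dd] conjI allI impI)
    show "dd N 0 = dN" by (rule dd_N0)
  next
    fix a b assume "a + b = N"
    then show "comm E (dd a b) = smat (of_nat b) (dd (a + 1) (b - 1))" by (rule dd_E)
  next
    fix a b assume "a + b = N"
    then show "comm F (dd a b) = smat (of_nat a) (dd (a - 1) (b + 1))" by (rule dd_F)
  next
    fix a b assume "a + b = N"
    then show "comm H (dd a b) = smat (of_int (int a - int b)) (dd a b)" by (rule dd_H)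
  next
    fix a b assume ab: "a + b = N"
    obtain \<gamma> where g: "S ** w b = \<gamma> *\<^sub>R (w a ** S)" using sym_w[of b] ab
      by (metis add_diff_cancel_right' le_add2)
    obtain \<gamma>' where g': "S ** w a = \<gamma>' *\<^sub>R (w b ** S)" using sym_w[of a] ab
      by (metis add_diff_cancel_left' le_add1)
    obtain S' where S': "S' ** S = mat 1" "S ** S' = mat 1" using S_inv by blast
    show "\<exists>c. c \<noteq> 0 \<and> S ** dd a b = smat c (dd b a ** S)"
    proof (cases "\<gamma> = 0")
      case True
      then have "S ** w b = 0" using g by simp
      then have wb: "w b = 0" using S'(1) by (metis matrix_mul_assoc matrix_mul_lid times0_right)
      then have "S ** w a = 0" using g' by simp
      then have wa: "w a = 0" using S'(1) by (metis matrix_mul_assoc matrix_mul_lid times0_right)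
      show ?thesis
        by (rule exI[of _ 1]) (simp add: dd_def wa wb smat_def vec_eq_iff)
    next
      case False
      define c where "c = fact a * \<gamma> / fact b"
      have "c \<noteq> 0" using False by (simp add: c_def)
      have "S ** dd a b = (fact a / fact N * \<gamma>) *\<^sub>R (w a ** S)"
        by (simp add: dd_def mm_scale_r g)
      also have "\<dots> = c *\<^sub>R (dd b a ** S)"
        by (simp add: dd_def mm_scale_l c_def)
      also have "\<dots> = smat (of_real c) (dd b a ** S)" by (simp add: smat_real)
      finally show ?thesis using \<open>c \<noteq> 0\<close> by (intro exI[of _ "complex_of_real c"]) simp
    qed
  qed
qed

end
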